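(* For all integers $k\geq 1$ and $n\geq 3$ with $(k,n)\neq(1,5)$, $\chi_i(C_{4k}\Box C_n)\leq 6$.
   Context: For a graph $G$, an incidence is a pair $(v,e)$ with $v\in V(G)$, $e\in E(G)$ and $v$ incident with $e$. Two incidences $(v,e)$ and $(w,f)$ are adjacent if $v=w$, or $e=f$, or the edge $vw$ equals $e$ or $f$. An incidence $k$-coloring of $G$ is a map from the set of incidences of $G$ to a set of $k$ colors such that adjacent incidences receive distinct colors; the incidence chromatic number $\chi_i(G)$ is the least such $k$. $C_n$ denotes the cycle on $n$ vertices and $\Box$ the Cartesian product of graphs: $G\Box H$ has vertex set $V(G)\times V(H)$, with $(u_1,v_1)$ adjacent to $(u_2,v_2)$ iff either $u_1=u_2$ and $v_1v_2\in E(H)$, or $v_1=v_2$ and $u_1u_2\in E(G)$. *)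

theory Defs
  imports Main
begin

text \<open>A simple graph is represented by its edge set: a set of 2-element vertex sets.
Incidences only depend on the edges.\<close>

definition incidences :: "'a set set \<Rightarrow> ('a \<times> 'a set) set" where
  "incidences E = {(v, e). e \<in> E \<and> v \<in> e}"

definition adjacent_incidences :: "'a \<times> 'a set \<Rightarrow> 'a \<times> 'a set \<Rightarrow> bool" where
  "adjacent_incidences p q =
     (case p of (v, e) \<Rightarrow> case q of (w, f) \<Rightarrow>
        v = w \<or> e = f \<or> {v, w} = e \<or> {v, w} = f)"

definition incidence_coloring :: "'a set set \<Rightarrow> nat \<Rightarrow> ('a \<times> 'a set \<Rightarrow> nat) \<Rightarrow> bool" where
  "incidence_coloring E k c \<longleftrightarrow>
     (\<forall>p \<in> incidences E. c p < k) \<and>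
     (\<forall>p \<in> incidences E. \<forall>q \<in> incidences E.
        p \<noteq> q \<and> adjacent_incidences p q \<longrightarrow> c p \<noteq> c q)"

definition incidence_chromatic_number :: "'a set set \<Rightarrow> nat" where
  "incidence_chromatic_number E = (LEAST k. \<exists>c. incidence_coloring E k c)"

text \<open>The cycle C_n on vertex set {0..<n} (meaningful for n >= 3).\<close>
definition cycle_edges :: "nat \<Rightarrow> nat set set" where
  "cycle_edges n = {{i, Suc i mod n} | i. i < n}"

definition cart_prod_edges ::
  "'a set \<Rightarrow> 'a set set \<Rightarrow> 'b set \<Rightarrow> 'b set set \<Rightarrow> ('a \<times> 'b) set set" where
  "cart_prod_edges V1 E1 V2 E2 =
     {{(u, v), (u, v')} | u v v'. u \<in> V1 \<and> {v, v'} \<in> E2} \<union>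
     {{(u, v), (u', v)} | u u' v. {u, u'} \<in> E1 \<and> v \<in> V2}"

end

theory Submission
  imports Defs
begin


definition nb :: "nat \<Rightarrow> nat \<Rightarrow> nat \<times> nat \<Rightarrow> nat \<Rightarrow> nat \<times> nat" where
  "nb m n v d = (if d = 0 then (Suc (fst v) mod m, snd v)
     else if d = 1 then ((fst v + m - 1) mod m, snd v)
     else if d = 2 then (fst v, Suc (snd v) mod n)
     else (fst v, (snd v + n - 1) mod n))"

lemma suc_mod_eq: "i < m \<Longrightarrow> Suc i mod m = (if Suc i = m then 0 else Suc i)"
  by auto

lemma pred_mod_eq: "i < m \<Longrightarrow> (i + m - Suc 0) mod m = (if i = 0 then m - Suc 0 else i - Suc 0)"
proof -
  assume a: "i < m"
  show ?thesis
  proof (cases "i = 0")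
    case True then show ?thesis using a by simp
  next
    case False
    have "i + m - Suc 0 = (i - Suc 0) + m" using False by simp
    hence "(i + m - Suc 0) mod m = (i - Suc 0) mod m" by simp
    thus ?thesis using False a by simp
  qed
qed

lemma pred_of_suc: "t < n \<Longrightarrow> (Suc t mod n + n - Suc 0) mod n = t"
  by (auto simp add: suc_mod_eq pred_mod_eq)

lemma suc_of_pred: "t < n \<Longrightarrow> Suc ((t + n - Suc 0) mod n) mod n = t"
  by (auto simp add: suc_mod_eq pred_mod_eq)

lemma nb_range: "fst v < m \<Longrightarrow> snd v < n \<Longrightarrow> fst (nb m n v d) < m \<and> snd (nb m n v d) < n"
  by (auto simp: nb_def)

lemma nb_ne: "m \<ge> 3 \<Longrightarrow> n \<ge> 3 \<Longrightarrow> fst v < m \<Longrightarrow> snd v < n \<Longrightarrow> nb m n v d \<noteq> v"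
  by (cases v) (auto simp: nb_def suc_mod_eq pred_mod_eq split: if_splits)

lemma nb_inj: "m \<ge> 3 \<Longrightarrow> n \<ge> 3 \<Longrightarrow> fst v < m \<Longrightarrow> snd v < n \<Longrightarrow> d < 4 \<Longrightarrow> d' < 4
  \<Longrightarrow> nb m n v d = nb m n v d' \<Longrightarrow> d = d'"
  apply (cases v)
  apply (auto simp: nb_def suc_mod_eq pred_mod_eq split: if_splits)
  done

abbreviation G :: "nat \<Rightarrow> nat \<Rightarrow> (nat \<times> nat) set set" where
  "G m n \<equiv> cart_prod_edges {..<m} (cycle_edges m) {..<n} (cycle_edges n)"

lemma inc_char:
  assumes "m \<ge> 3" "n \<ge> 3" "(v, e) \<in> incidences (G m n)"
  shows "fst v < m \<and> snd v < n \<and> (\<exists>d<4. e = {v, nb m n v d})"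
proof -
  have ve: "v \<in> e" and eG: "e \<in> G m n" using assms(3) by (auto simp: incidences_def)
  from eG consider
      (V) u x x' where "e = {(u, x), (u, x')}" "u < m" "{x, x'} \<in> cycle_edges n"
    | (H) u u' x where "e = {(u, x), (u', x)}" "x < n" "{u, u'} \<in> cycle_edges m"
    unfolding cart_prod_edges_def by blast
  then show ?thesis
  proof cases
    case V
    then obtain t where t: "t < n" "{x, x'} = {t, Suc t mod n}" unfolding cycle_edges_def by blast
    have e: "e = {(u, t), (u, Suc t mod n)}" using V(1) t(2) by (auto simp: doubleton_eq_iff)
    from ve e have "v = (u, t) \<or> v = (u, Suc t mod n)" by auto
    then show ?thesis
    proof
      assume v: "v = (u, t)"
      have "e = {v, nb m n v 2}" using e v by (simp add: nb_def)
      moreover have "(2::nat) < 4" by simp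
      ultimately have ex: "\<exists>d<4. e = {v, nb m n v d}" by blast
      have "fst v < m \<and> snd v < n" using v V(2) t(1) by simp
      then show ?thesis using ex by blast
    next
      assume v: "v = (u, Suc t mod n)"
      have "nb m n v 3 = (u, t)" using v t by (simp add: nb_def pred_of_suc)
      hence "e = {v, nb m n v 3}" using e v by (simp add: insert_commute)
      moreover have "(3::nat) < 4" by simp
      ultimately have ex: "\<exists>d<4. e = {v, nb m n v d}" by blast
      have "fst v < m \<and> snd v < n" using v V(2) t(1) by simp
      then show ?thesis using ex by blast
    qed
  next
    case H
    then obtain t where t: "t < m" "{u, u'} = {t, Suc t mod m}" unfolding cycle_edges_def by blast
    have e: "e = {(t, x), (Suc t mod m, x)}" using H(1) t(2) by (auto simp: doubleton_eq_iff)
    from ve e have "v = (t, x) \<or> v = (Suc t mod m, x)" by auto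
    then show ?thesis
    proof
      assume v: "v = (t, x)"
      have "e = {v, nb m n v 0}" using e v by (simp add: nb_def)
      moreover have "(0::nat) < 4" by simp
      ultimately have ex: "\<exists>d<4. e = {v, nb m n v d}" by blast
      have "fst v < m \<and> snd v < n" using v H(2) t(1) by simp
      then show ?thesis using ex by blast
    next
      assume v: "v = (Suc t mod m, x)"
      have "nb m n v 1 = (t, x)" using v t by (simp add: nb_def pred_of_suc)
      hence "e = {v, nb m n v 1}" using e v by (simp add: insert_commute)
      moreover have "(1::nat) < 4" by simp
      ultimately have ex: "\<exists>d<4. e = {v, nb m n v d}" by blast
      have "fst v < m \<and> snd v < n" using v H(2) t(1) by simp
      then show ?thesis using ex by blast
    qed
  qed
qed

definition colr :: "nat \<Rightarrow> nat \<Rightarrow> (nat \<times> nat \<Rightarrow> nat \<Rightarrow> nat) \<Rightarrow> (nat \<times> nat) \<times> (nat \<times> nat) set \<Rightarrow> nat" where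
  "colr m n col p = (if snd p = {fst p, nb m n (fst p) 0} then col (fst p) 0
     else if snd p = {fst p, nb m n (fst p) 1} then col (fst p) 1
     else if snd p = {fst p, nb m n (fst p) 2} then col (fst p) 2 else col (fst p) 3)"

lemma doub_eq: "a \<noteq> v \<Longrightarrow> b \<noteq> v \<Longrightarrow> {v, a} = {v, b} \<Longrightarrow> a = b"
  by (auto simp: doubleton_eq_iff)

lemma colr_val:
  assumes "m \<ge> 3" "n \<ge> 3" "fst v < m" "snd v < n" "d < 4"
  shows "colr m n col (v, {v, nb m n v d}) = col v d"
proof -
  have I: "\<And>d'. d' < 4 \<Longrightarrow> {v, nb m n v d} = {v, nb m n v d'} \<longleftrightarrow> d = d'"
    using doub_eq nb_ne nb_inj assms by metis
  show ?thesis using assms(5) I[of 0] I[of 1] I[of 2] I[of 3]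
    by (auto simp: colr_def)
qed

lemma general:
  fixes col :: "nat \<times> nat \<Rightarrow> nat \<Rightarrow> nat"
  assumes m3: "m \<ge> 3" and n3: "n \<ge> 3"
  and C0: "\<forall>i<m. \<forall>j<n. \<forall>d<4. col (i,j) d < 6"
  and C1: "\<forall>i<m. \<forall>j<n. \<forall>d<4. \<forall>d'<4. d \<noteq> d' \<longrightarrow> col (i,j) d \<noteq> col (i,j) d'"
  and C2: "\<forall>i<m. \<forall>j<n. \<forall>d<4. \<forall>d'<4. col (i,j) d \<noteq> col (nb m n (i,j) d) d'"
  shows "incidence_chromatic_number (G m n) \<le> 6"
proof -
  have C2': "col v d \<noteq> col (nb m n v d) d'" if "fst v < m" "snd v < n" "d < 4" "d' < 4" for v d d'
    using C2 that by (cases v) auto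
  have C1': "col v d \<noteq> col v d'" if "fst v < m" "snd v < n" "d < 4" "d' < 4" "d \<noteq> d'" for v d d'
    using C1 that by (cases v) auto
  have C0': "col v d < 6" if "fst v < m" "snd v < n" "d < 4" for v d
    using C0 that by (cases v) auto
  have ch: "\<exists>v d. p = (v, {v, nb m n v d}) \<and> fst v < m \<and> snd v < n \<and> d < 4 \<and> colr m n col p = col v d"
    if "p \<in> incidences (G m n)" for p
  proof -
    obtain v e where p: "p = (v, e)" by (cases p) blast
    from inc_char[OF m3 n3] that p obtain d where
      r: "fst v < m" "snd v < n" "d < 4" "e = {v, nb m n v d}" by blast
    have "colr m n col p = col v d" using colr_val[OF m3 n3 r(1,2,3)] p r(4) by simp
    then show ?thesis using p r by blast
  qed
  have "incidence_coloring (G m n) 6 (colr m n col)"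
    unfolding incidence_coloring_def
  proof (intro conjI ballI impI)
    fix p assume "p \<in> incidences (G m n)"
    from ch[OF this] obtain v d where "p = (v, {v, nb m n v d})" "fst v < m" "snd v < n" "d < 4"
      "colr m n col p = col v d" by blast
    then show "colr m n col p < 6" using C0' by simp
  next
    fix p q assume pI: "p \<in> incidences (G m n)" and qI: "q \<in> incidences (G m n)"
      and pq: "p \<noteq> q \<and> adjacent_incidences p q"
    from ch[OF pI] obtain v d where p: "p = (v, {v, nb m n v d})" "fst v < m" "snd v < n" "d < 4"
      "colr m n col p = col v d" by blast
    from ch[OF qI] obtain x d' where q: "q = (x, {x, nb m n x d'})" "fst x < m" "snd x < n" "d' < 4"
      "colr m n col q = col x d'" by blast
    have nv: "nb m n v d \<noteq> v" using nb_ne[OF m3 n3 p(2,3)] .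
    have nx: "nb m n x d' \<noteq> x" using nb_ne[OF m3 n3 q(2,3)] .
    have adj: "v = x \<or> {v, nb m n v d} = {x, nb m n x d'} \<or> {v, x} = {v, nb m n v d} \<or> {v, x} = {x, nb m n x d'}"
      using pq p(1) q(1) by (simp add: adjacent_incidences_def)
    have "col v d \<noteq> col x d'"
    proof (cases "v = x")
      case True
      then have "d \<noteq> d'" using pq p(1) q(1) by auto
      then show ?thesis using C1' True p q by auto
    next
      case False
      then have "x = nb m n v d \<or> v = nb m n x d'" using adj nv nx
        by (auto simp: doubleton_eq_iff)
      then show ?thesis
      proof
        assume "x = nb m n v d" then show ?thesis using C2' p q by auto
      next
        assume "v = nb m n x d'" then show ?thesis using C2'[of x d' d] p q by auto
      qed
    qed
    then show "colr m n col p \<noteq> colr m n col q" using p(5) q(5) by simp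
  qed
  then have "\<exists>c. incidence_coloring (G m n) 6 c" by blast
  then show ?thesis unfolding incidence_chromatic_number_def by (rule Least_le)
qed



definition RA :: "(nat \<times> nat) list" where
  "RA = [(0,1),(1,2),(2,0),(2,3),(3,4),(4,5),(5,6),(6,0),(6,3)]"

definition sA :: "nat \<Rightarrow> nat \<Rightarrow> nat" where
  "sA p j = (if j < 3*p then j mod 3 else 3 + (j - 3*p) mod 4)"

lemma sA_lt: "sA p j < 7"
proof -
  have h1: "j mod 3 < 3" and h2: "(j - 3*p) mod 4 < 4" by simp_all
  have "j mod 3 < 7" "3 + (j - 3*p) mod 4 < 7" using h1 h2 by linarith+
  then show ?thesis unfolding sA_def by simp
qed

lemma RA3: "(x::nat) < 3 \<Longrightarrow> (x, Suc x mod 3) \<in> set RA"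
proof -
  assume "x < 3" then have "x = 0 \<or> x = 1 \<or> x = 2" by arith
  then show ?thesis by (elim disjE) (simp_all add: RA_def)
qed
lemma RA4: "(x::nat) < 4 \<Longrightarrow> (3 + x, 3 + Suc x mod 4) \<in> set RA"
proof -
  assume "x < 4" then have "x = 0 \<or> x = 1 \<or> x = 2 \<or> x = 3" by arith
  then show ?thesis by (elim disjE) (simp_all add: RA_def)
qed

lemma sA_step:
  assumes "n = 3*p + 4*q" "j < n"
  shows "(sA p j, sA p (Suc j mod n)) \<in> set RA"
proof (cases "Suc j < n")
  case True
  then have sj: "Suc j mod n = Suc j" by simp
  consider (a) "Suc j < 3*p" | (b) "Suc j = 3*p" | (c) "j \<ge> 3*p" by linarith
  then show ?thesis
  proof cases
    case a
    have "sA p j = j mod 3" "sA p (Suc j) = Suc (j mod 3) mod 3" using a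
      by (auto simp: sA_def mod_Suc_eq)
    then show ?thesis using sj RA3[of "j mod 3"] by simp
  next
    case b
    have e: "j = 2 + 3*(p-1)" using b by simp
    then have "j mod 3 = 2" unfolding e mod_mult_self2 by simp
    then have "sA p j = 2" "sA p (Suc j) = 3" using b by (auto simp: sA_def)
    then show ?thesis using sj by (simp add: RA_def)
  next
    case c
    have "Suc j - 3*p = Suc (j - 3*p)" using c by simp
    then have "sA p j = 3 + (j - 3*p) mod 4" "sA p (Suc j) = 3 + Suc ((j - 3*p) mod 4) mod 4" using c
      by (auto simp: sA_def mod_Suc_eq)
    then show ?thesis using sj RA4[of "(j - 3*p) mod 4"] by simp
  qed
next
  case False
  then have jn: "Suc j = n" using assms by auto
  then have sj: "Suc j mod n = 0" by simp
  show ?thesis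
  proof (cases "q = 0")
    case True
    then have "j < 3*p" "0 < 3*p" using jn assms by auto
    moreover have e: "j = 2 + 3*(p-1)" using jn assms True by simp
    then have "j mod 3 = 2" unfolding e mod_mult_self2 by simp
    ultimately have "sA p j = 2" "sA p 0 = 0" by (auto simp: sA_def)
    then show ?thesis using sj by (simp add: RA_def)
  next
    case False
    then have j3: "\<not> j < 3*p" using jn assms by auto
    moreover have e: "j - 3*p = 3 + 4*(q-1)" using jn assms False by simp
    then have "(j - 3*p) mod 4 = 3" unfolding e mod_mult_self2 by simp
    ultimately have "sA p j = 6" by (auto simp: sA_def)
    moreover have "sA p 0 = 0 \<or> sA p 0 = 3" by (auto simp: sA_def)
    ultimately show ?thesis using sj by (simp add: RA_def)
  qed
qed

definition RB :: "(nat \<times> nat) list" where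
  "RB = [(0,1),(1,2),(2,3),(3,4),(4,5),(5,6),(6,7),(7,0),(7,8),(8,9),(9,10),(10,11),(11,0)]"

definition sB :: "nat \<Rightarrow> nat \<Rightarrow> nat" where
  "sB a i = (if i < 8*a then i mod 8 else (i - 8*a) mod 12)"

lemma sB_lt: "sB a i < 12"
proof -
  have h1: "i mod 8 < 8" and h2: "(i - 8*a) mod 12 < 12" by simp_all
  have "i mod 8 < 12" using h1 by linarith
  then show ?thesis unfolding sB_def using h2 by simp
qed

lemma lt8: "(x::nat) < 8 \<Longrightarrow> x = 0 \<or> x = 1 \<or> x = 2 \<or> x = 3 \<or> x = 4 \<or> x = 5 \<or> x = 6 \<or> x = 7" by arith
lemma lt12: "(x::nat) < 12 \<Longrightarrow> x = 0 \<or> x = 1 \<or> x = 2 \<or> x = 3 \<or> x = 4 \<or> x = 5 \<or> x = 6 \<or> x = 7 \<or> x = 8 \<or> x = 9 \<or> x = 10 \<or> x = 11" by arith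
lemma RB8: "(x::nat) < 8 \<Longrightarrow> (x, Suc x mod 8) \<in> set RB"
  by (drule lt8) (elim disjE; simp add: RB_def)
lemma RB12: "(x::nat) < 12 \<Longrightarrow> (x, Suc x mod 12) \<in> set RB"
  by (drule lt12) (elim disjE; simp add: RB_def)

lemma sB_step:
  assumes "m = 8*a + 12*b" "i < m"
  shows "(sB a i, sB a (Suc i mod m)) \<in> set RB"
proof (cases "Suc i < m")
  case True
  then have sj: "Suc i mod m = Suc i" by simp
  consider (a) "Suc i < 8*a" | (b) "Suc i = 8*a" | (c) "i \<ge> 8*a" by linarith
  then show ?thesis
  proof cases
    case a
    have "sB a i = i mod 8" "sB a (Suc i) = Suc (i mod 8) mod 8" using a
      by (auto simp: sB_def mod_Suc_eq)
    moreover have "i mod 8 < 8" by simp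
    ultimately show ?thesis using sj RB8[of "i mod 8"] by simp
  next
    case b
    have e: "i = 7 + 8*(a-1)" using b by simp
    then have "i mod 8 = 7" unfolding e mod_mult_self2 by simp
    then have "sB a i = 7" "sB a (Suc i) = 0" using b by (auto simp: sB_def)
    then show ?thesis using sj by (simp add: RB_def)
  next
    case c
    have "Suc i - 8*a = Suc (i - 8*a)" using c by simp
    then have "sB a i = (i - 8*a) mod 12" "sB a (Suc i) = Suc ((i - 8*a) mod 12) mod 12" using c
      by (auto simp: sB_def mod_Suc_eq)
    moreover have "(i - 8*a) mod 12 < 12" by simp
    ultimately show ?thesis using sj RB12[of "(i - 8*a) mod 12"] by simp
  qed
next
  case False
  then have jn: "Suc i = m" using assms by auto
  then have sj: "Suc i mod m = 0" by simp
  have s0: "sB a 0 = 0" by (auto simp: sB_def)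
  show ?thesis
  proof (cases "b = 0")
    case True
    then have "i < 8*a" using jn assms by auto
    moreover have e: "i = 7 + 8*(a-1)" using jn assms True by simp
    then have "i mod 8 = 7" unfolding e mod_mult_self2 by simp
    ultimately have "sB a i = 7" by (auto simp: sB_def)
    then show ?thesis using sj s0 by (simp add: RB_def)
  next
    case False
    then have j3: "\<not> i < 8*a" using jn assms by auto
    moreover have e: "i - 8*a = 11 + 12*(b-1)" using jn assms False by simp
    then have "(i - 8*a) mod 12 = 11" unfolding e mod_mult_self2 by simp
    ultimately have "sB a i = 11" by (auto simp: sB_def)
    then show ?thesis using sj s0 by (simp add: RB_def)
  qed
qed



definition TA :: "nat list list list" where
  "TA = [[[1,0,4,3],[5,1,3,2],[1,4,2,0],[1,0,4,3],[1,3,2,5],[5,1,3,4],[5,4,2,0]],[[3,5,2,0],[3,4,0,1],[5,3,4,2],[3,2,5,0],[2,0,3,4],[4,2,0,1],[2,1,4,3]],[[2,1,4,5],[5,2,1,0],[2,0,3,4],[2,1,0,5],[1,5,4,3],[5,3,2,0],[4,0,3,1]],[[5,3,1,4],[0,3,4,2],[3,5,0,1],[5,3,1,4],[4,0,5,2],[2,4,0,3],[3,5,2,1]]]"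

definition TB :: "nat list list list" where
  "TB = [[[0,1,2,3],[1,3,0,5],[5,1,3,2],[2,4,5,0],[0,2,4,1]],[[5,4,2,1],[5,4,0,3],[3,4,2,1],[4,3,1,0],[4,5,3,2]],[[2,0,1,4],[0,2,4,3],[1,0,2,5],[1,5,0,3],[3,1,5,2]],[[0,5,3,4],[4,1,5,2],[2,4,3,0],[0,2,4,5],[5,0,2,1]],[[5,2,1,4],[2,3,5,0],[3,1,0,4],[1,3,4,5],[1,3,0,2]],[[4,3,2,1],[5,1,3,0],[1,5,2,4],[5,0,4,3],[3,5,0,2]],[[1,0,5,2],[3,2,1,4],[3,0,4,5],[0,2,3,1],[0,1,4,5]],[[4,3,5,0],[4,0,1,2],[4,2,0,5],[1,5,2,3],[5,3,1,4]],[[2,1,5,3],[1,3,2,0],[0,3,1,5],[3,0,5,4],[1,0,4,2]],[[5,0,3,1],[0,5,4,2],[3,2,5,1],[1,2,0,4],[2,5,4,3]],[[1,4,0,2],[2,1,3,5],[5,4,2,0],[0,5,4,3],[3,0,5,1]],[[4,5,3,2],[4,0,5,1],[4,3,0,2],[1,2,3,5],[5,4,1,0]]]"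

definition chkA1 :: bool where
  "chkA1 = list_all (\<lambda>a. list_all (\<lambda>b. list_all (\<lambda>d. TA!a!b!d < 6 \<and> list_all (\<lambda>d'.
      (d \<noteq> d' \<longrightarrow> TA!a!b!d \<noteq> TA!a!b!d') \<and> TA!a!b!0 \<noteq> TA!(Suc a mod 4)!b!d'
      \<and> TA!a!b!1 \<noteq> TA!((a + 3) mod 4)!b!d') [0..<4]) [0..<4]) [0..<7]) [0..<4]"

definition chkA2 :: bool where
  "chkA2 = list_all (\<lambda>(x,y). list_all (\<lambda>a. list_all (\<lambda>d'.
      TA!a!x!2 \<noteq> TA!a!y!d' \<and> TA!a!y!3 \<noteq> TA!a!x!d') [0..<4]) [0..<4]) RA"

definition chkB1 :: bool where
  "chkB1 = list_all (\<lambda>a. list_all (\<lambda>b. list_all (\<lambda>d. TB!a!b!d < 6 \<and> list_all (\<lambda>d'.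
      (d \<noteq> d' \<longrightarrow> TB!a!b!d \<noteq> TB!a!b!d') \<and> TB!a!b!2 \<noteq> TB!a!(Suc b mod 5)!d'
      \<and> TB!a!b!3 \<noteq> TB!a!((4 + b) mod 5)!d') [0..<4]) [0..<4]) [0..<5]) [0..<12]"

definition chkB2 :: bool where
  "chkB2 = list_all (\<lambda>(x,y). list_all (\<lambda>b. list_all (\<lambda>d'.
      TB!x!b!0 \<noteq> TB!y!b!d' \<and> TB!y!b!1 \<noteq> TB!x!b!d') [0..<4]) [0..<5]) RB"

lemma chkA1: chkA1 by code_simp
lemma chkA2: chkA2 by code_simp
lemma chkB1: chkB1 by code_simp
lemma chkB2: chkB2 by code_simp



lemma la: "list_all P [0..<N] \<Longrightarrow> (a::nat) < N \<Longrightarrow> P a"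
  by (simp add: list_all_iff)

lemma lr: "list_all P xs \<Longrightarrow> x \<in> set xs \<Longrightarrow> P x"
  by (simp add: list_all_iff)

lemma A1: "a < 4 \<Longrightarrow> b < 7 \<Longrightarrow> d < 4 \<Longrightarrow> d' < 4 \<Longrightarrow>
   TA!a!b!d < 6 \<and> (d \<noteq> d' \<longrightarrow> TA!a!b!d \<noteq> TA!a!b!d') \<and> TA!a!b!0 \<noteq> TA!(Suc a mod 4)!b!d'
      \<and> TA!a!b!1 \<noteq> TA!((a + 3) mod 4)!b!d'"
  using la[OF la[OF la[OF chkA1[unfolded chkA1_def]]]] la by blast

lemma A2: "(x, y) \<in> set RA \<Longrightarrow> a < 4 \<Longrightarrow> d' < 4 \<Longrightarrow>
   TA!a!x!2 \<noteq> TA!a!y!d' \<and> TA!a!y!3 \<noteq> TA!a!x!d'"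
  using lr[OF chkA2[unfolded chkA2_def]] by (fastforce simp: list_all_iff)

lemma B1: "a < 12 \<Longrightarrow> b < 5 \<Longrightarrow> d < 4 \<Longrightarrow> d' < 4 \<Longrightarrow>
   TB!a!b!d < 6 \<and> (d \<noteq> d' \<longrightarrow> TB!a!b!d \<noteq> TB!a!b!d') \<and> TB!a!b!2 \<noteq> TB!a!(Suc b mod 5)!d'
      \<and> TB!a!b!3 \<noteq> TB!a!((4 + b) mod 5)!d'"
  using la[OF la[OF la[OF chkB1[unfolded chkB1_def]]]] la by blast

lemma B2: "(x, y) \<in> set RB \<Longrightarrow> b < 5 \<Longrightarrow> d' < 4 \<Longrightarrow>
   TB!x!b!0 \<noteq> TB!y!b!d' \<and> TB!y!b!1 \<noteq> TB!x!b!d'"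
  using lr[OF chkB2[unfolded chkB2_def]] by (fastforce simp: list_all_iff)

lemma d4: "(d::nat) < 4 \<Longrightarrow> d = 0 \<or> d = 1 \<or> d = 2 \<or> d = 3" by arith

lemma m4s: "0 < k \<Longrightarrow> (Suc i mod (4*k)) mod 4 = Suc (i mod 4) mod 4"
  by (simp add: mod_mod_cancel mod_Suc_eq)

lemma m4p: "0 < k \<Longrightarrow> ((i + 4*k - Suc 0) mod (4*k)) mod 4 = (i mod 4 + 3) mod 4"
proof -
  assume k: "0 < k"
  have "i + 4*k - Suc 0 = (i + 3) + 4*(k - 1)" using k by simp
  then have "((i + 4*k - Suc 0) mod (4*k)) mod 4 = ((i + 3) + 4*(k-1)) mod 4"
    by (simp add: mod_mod_cancel)
  also have "\<dots> = (i + 3) mod 4" by (simp only: mod_mult_self2)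
  also have "\<dots> = (i mod 4 + 3) mod 4" by (simp add: mod_add_left_eq)
  finally show ?thesis .
qed

lemma caseA:
  assumes k: "k \<ge> 1" and n: "n = 3*p + 4*q" "n \<ge> 3"
  shows "incidence_chromatic_number (G (4*k) n) \<le> 6"
proof (rule general[where col = "\<lambda>v d. TA ! (fst v mod 4) ! (sA p (snd v)) ! d"])
  show "4*k \<ge> 3" using k by simp
  show "n \<ge> 3" using n by simp
  show "\<forall>i<4*k. \<forall>j<n. \<forall>d<4. TA ! (fst (i,j) mod 4) ! (sA p (snd (i,j))) ! d < 6"
    using A1 sA_lt by simp
  show "\<forall>i<4*k. \<forall>j<n. \<forall>d<4. \<forall>d'<4. d \<noteq> d' \<longrightarrow>
      TA ! (fst (i,j) mod 4) ! (sA p (snd (i,j))) ! d \<noteq> TA ! (fst (i,j) mod 4) ! (sA p (snd (i,j))) ! d'"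
    using A1 sA_lt by simp
  show "\<forall>i<4*k. \<forall>j<n. \<forall>d<4. \<forall>d'<4. TA ! (fst (i,j) mod 4) ! (sA p (snd (i,j))) ! d \<noteq>
      TA ! (fst (nb (4*k) n (i,j) d) mod 4) ! (sA p (snd (nb (4*k) n (i,j) d))) ! d'"
  proof (intro allI impI)
    fix i j d d' :: nat assume i: "i < 4*k" and j: "j < n" and d: "d < 4" and d': "d' < 4"
    have a4: "i mod 4 < 4" by simp
    have k0: "0 < k" using k by simp
    from d4[OF d] consider "d = 0" | "d = 1" | "d = 2" | "d = 3" by blast
    then show "TA ! (fst (i,j) mod 4) ! (sA p (snd (i,j))) ! d \<noteq>
      TA ! (fst (nb (4*k) n (i,j) d) mod 4) ! (sA p (snd (nb (4*k) n (i,j) d))) ! d'"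
    proof cases
      case 1
      then show ?thesis using A1[OF a4 sA_lt d d'] by (simp add: nb_def m4s[OF k0])
    next
      case 2
      then show ?thesis using A1[OF a4 sA_lt d d'] by (simp add: nb_def m4p[OF k0])
    next
      case 3
      have "(sA p j, sA p (Suc j mod n)) \<in> set RA" using sA_step[OF n(1) j] .
      then show ?thesis using 3 A2[OF _ a4 d'] by (simp add: nb_def)
    next
      case 4
      define j' where "j' = (j + n - Suc 0) mod n"
      have j': "j' < n" using j unfolding j'_def by simp
      have "Suc j' mod n = j" unfolding j'_def using suc_of_pred[OF j] .
      then have "(sA p j', sA p j) \<in> set RA" using sA_step[OF n(1) j'] by simp
      then show ?thesis using 4 A2[OF _ a4 d'] by (simp add: nb_def j'_def)
    qed
  qed
qed

lemma caseB:
  assumes k: "4*k = 8*a + 12*b" "k \<ge> 1"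
  shows "incidence_chromatic_number (G (4*k) 5) \<le> 6"
proof (rule general[where col = "\<lambda>v d. TB ! (sB a (fst v)) ! (snd v) ! d"])
  show "4*k \<ge> 3" using k by simp
  show "(5::nat) \<ge> 3" by simp
  show "\<forall>i<4*k. \<forall>j<5. \<forall>d<4. TB ! (sB a (fst (i,j))) ! (snd (i,j)) ! d < 6"
    using B1 sB_lt by simp
  show "\<forall>i<4*k. \<forall>j<5. \<forall>d<4. \<forall>d'<4. d \<noteq> d' \<longrightarrow>
      TB ! (sB a (fst (i,j))) ! (snd (i,j)) ! d \<noteq> TB ! (sB a (fst (i,j))) ! (snd (i,j)) ! d'"
    using B1 sB_lt by simp
  show "\<forall>i<4*k. \<forall>j<5. \<forall>d<4. \<forall>d'<4. TB ! (sB a (fst (i,j))) ! (snd (i,j)) ! d \<noteq>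
      TB ! (sB a (fst (nb (4*k) 5 (i,j) d))) ! (snd (nb (4*k) 5 (i,j) d)) ! d'"
  proof (intro allI impI)
    fix i j d d' :: nat assume i: "i < 4*k" and j: "j < 5" and d: "d < 4" and d': "d' < 4"
    from d4[OF d] consider "d = 0" | "d = 1" | "d = 2" | "d = 3" by blast
    then show "TB ! (sB a (fst (i,j))) ! (snd (i,j)) ! d \<noteq>
      TB ! (sB a (fst (nb (4*k) 5 (i,j) d))) ! (snd (nb (4*k) 5 (i,j) d)) ! d'"
    proof cases
      case 1
      have "(sB a i, sB a (Suc i mod (4*k))) \<in> set RB" using sB_step[OF k(1) i] .
      then show ?thesis using 1 B2[OF _ j d'] by (simp add: nb_def)
    next
      case 2
      define i' where "i' = (i + 4*k - Suc 0) mod (4*k)"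
      have i': "i' < 4*k" using i unfolding i'_def by simp
      have "Suc i' mod (4*k) = i" unfolding i'_def using suc_of_pred[OF i] .
      then have "(sB a i', sB a i) \<in> set RB" using sB_step[OF k(1) i'] by simp
      then show ?thesis using 2 B2[OF _ j d'] by (simp add: nb_def i'_def)
    next
      case 3
      then show ?thesis using B1[OF sB_lt j d d'] by (simp add: nb_def)
    next
      case 4
      have "j + 5 - Suc 0 = j + 4" by simp
      then show ?thesis using 4 B1[OF sB_lt j d d'] by (simp add: nb_def)
    qed
  qed
qed


theorem lemma2:
  fixes k n :: nat
  assumes "k \<ge> 1" and "n \<ge> 3" and "(k, n) \<noteq> (1, 5)"
  shows "incidence_chromatic_number
           (cart_prod_edges {..<4*k} (cycle_edges (4*k)) {..<n} (cycle_edges n)) \<le> 6"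
proof (cases "n = 5")
  case False
  have "\<exists>p q. n = 3*p + 4*q" using False assms(2) by presburger
  then obtain p q where "n = 3*p + 4*q" by blast
  then show ?thesis using caseA assms by blast
next
  case True
  then have "k \<ge> 2" using assms by auto
  then have "\<exists>a b. k = 2*a + 3*b" by presburger
  then obtain a b where "k = 2*a + 3*b" by blast
  then have "4*k = 8*a + 12*b" by simp
  then show ?thesis using caseB[of k a b] True assms by simp
qed

end
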